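(* Let $p$ be a prime and let $G$ be a $1$-tuple regular finite group of exponent $p^s$ for some $s\in\mathbb{N}$. For all nontrivial $a,b\in G$ we have $\operatorname{ord}([a,b])<\min\{\operatorname{ord}(a),\operatorname{ord}(b)\}$. In particular, if $p$ is odd, then $G$ is a powerful $p$-group.
   Context: $[a,b]=aba^{-1}b^{-1}$. A finite $p$-group $G$ is powerful if $p$ is odd and $G'\subseteq\mho^1(G)$, or $p=2$ and $G'\subseteq\mho^2(G)$, where $\mho^i(G)$ is generated by the $p^i$-th powers. A finite group $G$ is $1$-tuple regular if for all $g_1,h_1\in G$ of the same order there is a bijection $\Psi\colon G\to G$ such that for every $g\in G$ the assignment $g_1\mapsto h_1, g\mapsto\Psi(g)$ defines an isomorphism $\langle g_1,g\rangle\to\langle h_1,\Psi(g)\rangle$. *)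

theory Defs
  imports "HOL-Algebra.Algebra"
begin

definition commutator :: "('a, 'b) monoid_scheme \<Rightarrow> 'a \<Rightarrow> 'a \<Rightarrow> 'a" where
  "commutator G a b = a \<otimes>\<^bsub>G\<^esub> b \<otimes>\<^bsub>G\<^esub> inv\<^bsub>G\<^esub> a \<otimes>\<^bsub>G\<^esub> inv\<^bsub>G\<^esub> b"

definition group_exponent :: "('a, 'b) monoid_scheme \<Rightarrow> nat" where
  "group_exponent G = (LEAST n. 0 < n \<and> (\<forall>x \<in> carrier G. x [^]\<^bsub>G\<^esub> n = \<one>\<^bsub>G\<^esub>))"

definition agemo :: "('a, 'b) monoid_scheme \<Rightarrow> nat \<Rightarrow> nat \<Rightarrow> 'a set" where
  "agemo G p i = generate G {x [^]\<^bsub>G\<^esub> (p ^ i) | x. x \<in> carrier G}"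

definition powerful_p_group :: "('a, 'b) monoid_scheme \<Rightarrow> nat \<Rightarrow> bool" where
  "powerful_p_group G p \<longleftrightarrow>
     finite (carrier G) \<and> (\<exists>k. order G = p ^ k) \<and>
     (if odd p then derived G (carrier G) \<subseteq> agemo G p 1
      else p = 2 \<and> derived G (carrier G) \<subseteq> agemo G p 2)"

definition one_tuple_regular :: "('a, 'b) monoid_scheme \<Rightarrow> bool" where
  "one_tuple_regular G \<longleftrightarrow>
     (\<forall>g1 \<in> carrier G. \<forall>h1 \<in> carrier G. group.ord G g1 = group.ord G h1 \<longrightarrow>
        (\<exists>\<Psi>. bij_betw \<Psi> (carrier G) (carrier G) \<and>
           (\<forall>g \<in> carrier G. \<exists>\<phi>.
               \<phi> \<in> iso (subgroup_generated G {g1, g}) (subgroup_generated G {h1, \<Psi> g}) \<and>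
               \<phi> g1 = h1 \<and> \<phi> g = \<Psi> g)))"

end

theory Submission
  imports Defs
begin

lemma iso_ord:
  assumes "group H" "group K" "f \<in> iso H K" "x \<in> carrier H"
  shows "group.ord K (f x) = group.ord H x"
proof -
  interpret H: group H by fact
  interpret K: group K by fact
  interpret hom: group_hom H K f
    using assms unfolding group_hom_def group_hom_axioms_def iso_def by auto
  have inj: "inj_on f (carrier H)" using assms(3) by (simp add: iso_def bij_betw_def)
  have "f x [^]\<^bsub>K\<^esub> n = \<one>\<^bsub>K\<^esub> \<longleftrightarrow> H.ord x dvd n" for n :: nat
  proof -
    have "f x [^]\<^bsub>K\<^esub> n = f (x [^]\<^bsub>H\<^esub> n)" using hom.hom_nat_pow assms(4) by simp
    moreover have "f (x [^]\<^bsub>H\<^esub> n) = \<one>\<^bsub>K\<^esub> \<longleftrightarrow> x [^]\<^bsub>H\<^esub> n = \<one>\<^bsub>H\<^esub>"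
      using inj assms(4) by (metis H.nat_pow_closed H.one_closed hom.hom_one inj_on_def)
    ultimately show ?thesis using H.pow_eq_id assms(4) by simp
  qed
  then show ?thesis using K.ord_unique[of "f x"] hom.hom_closed assms(4) by auto
qed

lemma ord_sgg:
  assumes "group G"
  shows "group.ord (subgroup_generated G S) x = group.ord G x"
proof -
  interpret group G by fact
  have "group (subgroup_generated G S)" by simp
  then show ?thesis
    by (simp add: group.ord_def assms pow_subgroup_generated)
qed

lemma hom_commutator:
  assumes "group H" "group K" "f \<in> hom H K" "x \<in> carrier H" "y \<in> carrier H"
  shows "f (commutator H x y) = commutator K (f x) (f y)"
proof -
  interpret hom: group_hom H K f
    using assms unfolding group_hom_def group_hom_axioms_def by auto
  show ?thesis using assms(4,5) by (simp add: commutator_def)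
qed

lemma commutator_sgg:
  assumes "group G" "x \<in> carrier (subgroup_generated G S)" "y \<in> carrier (subgroup_generated G S)"
  shows "commutator (subgroup_generated G S) x y = commutator G x y"
  using assms by (simp add: commutator_def group.inv_subgroup_generated)

lemma (in group) commutator_closed [simp]:
  "x \<in> carrier G \<Longrightarrow> y \<in> carrier G \<Longrightarrow> commutator G x y \<in> carrier G"
  by (simp add: commutator_def)

lemma (in group) commutator_one_iff:
  "x \<in> carrier G \<Longrightarrow> y \<in> carrier G \<Longrightarrow> commutator G x y = \<one> \<longleftrightarrow> x \<otimes> y = y \<otimes> x"
  unfolding commutator_def
  by (metis inv_closed inv_mult_group m_closed inv_equality r_inv m_assoc r_one)

lemma (in group) commutator_inv:
  "x \<in> carrier G \<Longrightarrow> y \<in> carrier G \<Longrightarrow> inv (commutator G x y) = commutator G y x"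
  unfolding commutator_def
  by (simp add: inv_mult_group m_assoc)

lemma (in subgroup) pow_closed_sub:
  assumes "group G" "x \<in> H" shows "x [^]\<^bsub>G\<^esub> (n::nat) \<in> H"
proof (induction n)
  case 0 then show ?case by (simp add: one_closed)
next
  case (Suc n) then show ?case using assms
    by (metis monoid.nat_pow_Suc group.is_monoid m_closed)
qed

lemma (in group) center_nontrivial:
  assumes fin: "finite (carrier G)" and p: "Factorial_Ring.prime (p::nat)"
    and ord: "order G = p ^ n" and n: "n > 0"
  shows "\<exists>z \<in> carrier G. z \<noteq> \<one> \<and> (\<forall>g \<in> carrier G. z \<otimes> g = g \<otimes> z)"
proof -
  define \<phi> where "\<phi> = (\<lambda>g. (\<lambda>h \<in> carrier G. g \<otimes> h \<otimes> (inv g)))"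
  interpret act: group_action G "carrier G" \<phi>
    unfolding \<phi>_def by (rule action_by_conjugation)
  let ?O = "orbits G (carrier G) \<phi>"
  have orbit_sub: "orbit G \<phi> x \<subseteq> carrier G" if "x \<in> carrier G" for x
    using that unfolding orbit_def \<phi>_def by auto
  have finO: "finite ?O"
  proof -
    have "?O \<subseteq> Pow (carrier G)" unfolding orbits_def using orbit_sub by auto
    then show ?thesis using fin by (meson finite_Pow_iff finite_subset)
  qed
  have sum: "(\<Sum>orb\<in>?O. card orb) = card (carrier G)"
  proof -
    have "(\<Sum>orb\<in>?O. card orb) = (\<Sum>orb\<in>?O. \<Sum>x\<in>orb. (1::nat))" by simp
    also have "\<dots> = (\<Sum>x\<in>carrier G. (1::nat))" by (rule act.disjoint_sum[OF fin])
    finally show ?thesis by simp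
  qed
  have cardorb: "\<exists>i. card orb = p ^ i" if "orb \<in> ?O" for orb
  proof -
    have "\<exists>x. x \<in> carrier G \<and> orb = orbit G \<phi> x" using that unfolding orbits_def by auto
    then obtain x where x: "x \<in> carrier G" "orb = orbit G \<phi> x" by blast
    have "card orb dvd p ^ n"
      using act.orbit_stabilizer_theorem[OF x(1)] x(2) ord by (metis dvd_triv_left)
    then show ?thesis using divides_primepow_nat[OF p] by auto
  qed
  define O1 where "O1 = {orb \<in> ?O. card orb = 1}"
  define O2 where "O2 = {orb \<in> ?O. card orb \<noteq> 1}"
  have U: "?O = O1 \<union> O2" "O1 \<inter> O2 = {}" unfolding O1_def O2_def by auto
  have fO: "finite O1" "finite O2" using finO unfolding O1_def O2_def by auto
  have split: "(\<Sum>orb\<in>?O. card orb) = (\<Sum>orb\<in>O1. card orb) + (\<Sum>orb\<in>O2. card orb)"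
    using sum.union_disjoint[OF fO U(2)] U(1) by simp
  have s1: "(\<Sum>orb\<in>O1. card orb) = card O1" unfolding O1_def by simp
  have s2: "p dvd (\<Sum>orb\<in>O2. card orb)"
  proof (rule dvd_sum)
    fix orb assume "orb \<in> O2"
    then have o2: "orb \<in> ?O" "card orb \<noteq> 1" unfolding O2_def by auto
    then obtain i where "card orb = p ^ i" using cardorb by blast
    with o2 have "card orb = p ^ i" "card orb \<noteq> 1" by auto
    then show "p dvd card orb" by (cases i) auto
  qed
  have "card (carrier G) = p ^ n" using ord by (simp add: order_def)
  then have "p dvd card (carrier G)" using n by (simp add: dvd_power)
  then have "p dvd card O1 + (\<Sum>orb\<in>O2. card orb)" using sum split s1 by simp
  then have "p dvd card O1" using s2 by (simp add: dvd_add_left_iff)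
  moreover have orb1: "orbit G \<phi> \<one> = {\<one>}" unfolding orbit_def \<phi>_def by (auto intro!: exI[of _ \<one>])
  then have "{\<one>} \<in> O1" unfolding O1_def orbits_def by force
  moreover have "card O1 > 0" using fO(1) \<open>{\<one>} \<in> O1\<close> card_gt_0_iff by blast
  ultimately have "p \<le> card O1" using dvd_imp_le by blast
  then have "card O1 \<ge> 2" using prime_ge_2_nat[OF p] by linarith
  have "\<not> O1 \<subseteq> {{\<one>}}"
  proof
    assume "O1 \<subseteq> {{\<one>}}"
    then have "card O1 \<le> 1" using card_mono[of "{{\<one>}}" O1] by simp
    with \<open>card O1 \<ge> 2\<close> show False by simp
  qed
  then obtain orb where orb: "orb \<in> O1" "orb \<noteq> {\<one>}" by blast
  then obtain x where x: "x \<in> carrier G" "orb = orbit G \<phi> x" "card orb = 1"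
    unfolding O1_def orbits_def by auto
  have "x \<in> orb" using x act.orbit_refl by auto
  moreover obtain y where "orb = {y}" using card_1_singletonE x(3) by blast
  ultimately have orbx: "orb = {x}" by simp
  have "x \<noteq> \<one>" using orbx orb(2) by auto
  moreover have "x \<otimes> g = g \<otimes> x" if g: "g \<in> carrier G" for g
  proof -
    have "\<phi> g x \<in> orb" using x g unfolding orbit_def by auto
    then have "g \<otimes> x \<otimes> inv g = x" using orbx x g unfolding \<phi>_def by auto
    then show ?thesis using g x(1) by (metis inv_solve_right m_closed)
  qed
  ultimately show ?thesis using x(1) by blast
qed


lemma (in group) comm_inv_l:
  "a \<in> carrier G \<Longrightarrow> b \<in> carrier G \<Longrightarrow> a \<otimes> b = b \<otimes> a \<Longrightarrow> inv a \<otimes> b = b \<otimes> inv a"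
  by (simp add: inv_solve_left inv_solve_right m_assoc)

lemma (in group) conj_comm:
  "h \<in> carrier G \<Longrightarrow> x \<in> carrier G \<Longrightarrow> x \<otimes> h = h \<otimes> x \<Longrightarrow> h \<otimes> x \<otimes> inv h = x"
  by (metis inv_solve_right m_closed)

lemma (in group) comm_mult_l:
  "a \<in> carrier G \<Longrightarrow> b \<in> carrier G \<Longrightarrow> c \<in> carrier G \<Longrightarrow> a \<otimes> c = c \<otimes> a \<Longrightarrow> b \<otimes> c = c \<otimes> b
   \<Longrightarrow> (a \<otimes> b) \<otimes> c = c \<otimes> (a \<otimes> b)"
  by (metis m_assoc)

lemma preimage_center_normal:
  assumes "group G" "group Q" "f \<in> hom G Q"
  shows "{x \<in> carrier G. \<forall>g \<in> carrier G. f x \<otimes>\<^bsub>Q\<^esub> f g = f g \<otimes>\<^bsub>Q\<^esub> f x} \<lhd> G"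
    (is "?N \<lhd> G")
proof -
  interpret G: group G by fact
  interpret Q: group Q by fact
  interpret h: group_hom G Q f
    using assms unfolding group_hom_def group_hom_axioms_def by auto
  define P where "P x \<longleftrightarrow> (\<forall>g \<in> carrier G. f x \<otimes>\<^bsub>Q\<^esub> f g = f g \<otimes>\<^bsub>Q\<^esub> f x)" for x
  have NP: "?N = {x \<in> carrier G. P x}" unfolding P_def by simp
  have mult: "P (x \<otimes>\<^bsub>G\<^esub> y)" if x: "x \<in> carrier G" "P x" and y: "y \<in> carrier G" "P y" for x y
    unfolding P_def
  proof
    fix g assume g: "g \<in> carrier G"
    have c1: "f x \<otimes>\<^bsub>Q\<^esub> f g = f g \<otimes>\<^bsub>Q\<^esub> f x" using x g unfolding P_def by blast
    have c2: "f y \<otimes>\<^bsub>Q\<^esub> f g = f g \<otimes>\<^bsub>Q\<^esub> f y" using y g unfolding P_def by blast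
    have "f (x \<otimes>\<^bsub>G\<^esub> y) = f x \<otimes>\<^bsub>Q\<^esub> f y" using x y by simp
    then show "f (x \<otimes>\<^bsub>G\<^esub> y) \<otimes>\<^bsub>Q\<^esub> f g = f g \<otimes>\<^bsub>Q\<^esub> f (x \<otimes>\<^bsub>G\<^esub> y)"
      using Q.comm_mult_l[OF h.hom_closed[OF x(1)] h.hom_closed[OF y(1)] h.hom_closed[OF g] c1 c2]
      by simp
  qed
  have inv: "P (inv\<^bsub>G\<^esub> x)" if x: "x \<in> carrier G" "P x" for x
    unfolding P_def
  proof
    fix g assume g: "g \<in> carrier G"
    have c1: "f x \<otimes>\<^bsub>Q\<^esub> f g = f g \<otimes>\<^bsub>Q\<^esub> f x" using x g unfolding P_def by blast
    have "f (inv\<^bsub>G\<^esub> x) = inv\<^bsub>Q\<^esub> f x" using x by simp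
    then show "f (inv\<^bsub>G\<^esub> x) \<otimes>\<^bsub>Q\<^esub> f g = f g \<otimes>\<^bsub>Q\<^esub> f (inv\<^bsub>G\<^esub> x)"
      using Q.comm_inv_l[OF h.hom_closed[OF x(1)] h.hom_closed[OF g] c1] by simp
  qed
  have one: "P \<one>\<^bsub>G\<^esub>" unfolding P_def by simp
  have conj: "P (h \<otimes>\<^bsub>G\<^esub> x \<otimes>\<^bsub>G\<^esub> inv\<^bsub>G\<^esub> h)" if h: "h \<in> carrier G" and x: "x \<in> carrier G" "P x" for h x
  proof -
    have c1: "f x \<otimes>\<^bsub>Q\<^esub> f h = f h \<otimes>\<^bsub>Q\<^esub> f x" using x h unfolding P_def by blast
    have "f (h \<otimes>\<^bsub>G\<^esub> x \<otimes>\<^bsub>G\<^esub> inv\<^bsub>G\<^esub> h) = f h \<otimes>\<^bsub>Q\<^esub> f x \<otimes>\<^bsub>Q\<^esub> inv\<^bsub>Q\<^esub> f h"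
      using h x by simp
    also have "\<dots> = f x" using Q.conj_comm[OF h.hom_closed[OF h] h.hom_closed[OF x(1)] c1] .
    finally have e: "f (h \<otimes>\<^bsub>G\<^esub> x \<otimes>\<^bsub>G\<^esub> inv\<^bsub>G\<^esub> h) = f x" .
    show ?thesis using x(2) unfolding P_def e .
  qed
  have sub: "subgroup {x \<in> carrier G. P x} G"
    by (rule G.subgroupI) (auto intro: mult inv one)
  show ?thesis unfolding NP G.normal_inv_iff
    using sub conj by auto
qed

lemma (in normal) comm_mem_iff:
  assumes "x \<in> carrier G" "g \<in> carrier G"
  shows "commutator G x g \<in> H \<longleftrightarrow>
         (H #> x) \<otimes>\<^bsub>G Mod H\<^esub> (H #> g) = (H #> g) \<otimes>\<^bsub>G Mod H\<^esub> (H #> x)"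
proof -
  have grpQ: "group (G Mod H)" by (rule factorgroup_is_group)
  have hom: "(\<lambda>a. H #> a) \<in> hom G (G Mod H)" by (rule r_coset_hom_Mod)
  have cx: "H #> x \<in> carrier (G Mod H)" "H #> g \<in> carrier (G Mod H)"
    using hom assms by (auto simp: hom_def)
  have eq: "H #> commutator G x g = commutator (G Mod H) (H #> x) (H #> g)"
    by (rule hom_commutator[OF is_group grpQ hom assms])
  have memiff: "H #> y = H \<longleftrightarrow> y \<in> H" if "y \<in> carrier G" for y
    using that rcos_const[OF is_group] rcos_self[OF that subgroup_axioms] by auto
  have "commutator G x g \<in> H \<longleftrightarrow> commutator (G Mod H) (H #> x) (H #> g) = \<one>\<^bsub>G Mod H\<^esub>"
    using memiff[of "commutator G x g"] eq assms by simp
  also have "\<dots> \<longleftrightarrow> (H #> x) \<otimes>\<^bsub>G Mod H\<^esub> (H #> g) = (H #> g) \<otimes>\<^bsub>G Mod H\<^esub> (H #> x)"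
    by (rule group.commutator_one_iff[OF grpQ cx])
  finally show ?thesis .
qed

primrec zeta :: "('a, 'b) monoid_scheme \<Rightarrow> nat \<Rightarrow> 'a set" where
  "zeta G 0 = {\<one>\<^bsub>G\<^esub>}"
| "zeta G (Suc i) = {x \<in> carrier G. \<forall>g \<in> carrier G. commutator G x g \<in> zeta G i}"

lemma (in group) zeta_Suc_char:
  assumes "zeta G i \<lhd> G"
  shows "zeta G (Suc i) = {x \<in> carrier G. \<forall>g \<in> carrier G.
     (zeta G i #> x) \<otimes>\<^bsub>G Mod zeta G i\<^esub> (zeta G i #> g) = (zeta G i #> g) \<otimes>\<^bsub>G Mod zeta G i\<^esub> (zeta G i #> x)}"
  apply (simp only: zeta.simps)
  apply (rule Collect_cong)
  apply (rule conj_cong, rule refl)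
  apply (rule ball_cong, rule refl)
  by (rule normal.comm_mem_iff[OF assms])

lemma (in group) zeta_normal: "zeta G i \<lhd> G"
proof (induction i)
  case 0
  then show ?case using one_is_normal by simp
next
  case (Suc i)
  have "group (G Mod zeta G i)" by (rule normal.factorgroup_is_group[OF Suc])
  moreover have "(\<lambda>a. zeta G i #> a) \<in> hom G (G Mod zeta G i)" by (rule normal.r_coset_hom_Mod[OF Suc])
  ultimately show ?case
    unfolding zeta_Suc_char[OF Suc] by (rule preimage_center_normal[OF is_group])
qed

lemma (in group) zeta_subset: "zeta G i \<subseteq> carrier G"
  using zeta_normal normal_imp_subgroup subgroup.subset by blast

lemma (in group) zeta_mono: "zeta G i \<subseteq> zeta G (Suc i)"
proof
  fix x assume x: "x \<in> zeta G i"
  have N: "zeta G i \<lhd> G" by (rule zeta_normal)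
  have xc: "x \<in> carrier G" using x zeta_subset by auto
  have "commutator G x g \<in> zeta G i" if g: "g \<in> carrier G" for g
  proof -
    have "g \<otimes> inv x \<otimes> inv g \<in> zeta G i"
      using N g x by (metis normal_inv_iff normal_imp_subgroup subgroup.m_inv_closed)
    then have "x \<otimes> (g \<otimes> inv x \<otimes> inv g) \<in> zeta G i"
      using x N by (metis normal_imp_subgroup subgroup.m_closed)
    then show ?thesis using xc g by (simp add: commutator_def m_assoc)
  qed
  then show "x \<in> zeta G (Suc i)" using xc by simp
qed


lemma (in group) zeta_grow:
  assumes fin: "finite (carrier G)" and p: "Factorial_Ring.prime (p::nat)"
    and ordG: "order G = p ^ n" and ne: "zeta G i \<noteq> carrier G"
  shows "\<exists>x \<in> zeta G (Suc i). x \<notin> zeta G i"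
proof -
  let ?N = "zeta G i"
  have N: "?N \<lhd> G" by (rule zeta_normal)
  have sub: "subgroup ?N G" using N normal_imp_subgroup by blast
  interpret Nn: normal ?N G by (rule N)
  let ?Q = "G Mod ?N"
  have grpQ: "group ?Q" by (rule Nn.factorgroup_is_group)
  have cQ: "carrier ?Q = rcosets ?N" by (simp add: FactGroup_def)
  have lag: "card (rcosets ?N) * card ?N = order G" by (rule lagrange[OF sub])
  have finQ: "finite (carrier ?Q)" unfolding carrier_FactGroup using fin by simp
  have "card (rcosets ?N) dvd p ^ n" using lag ordG by (metis dvd_triv_left)
  then obtain m where m: "card (rcosets ?N) = p ^ m" using divides_primepow_nat[OF p] by auto
  have "m \<noteq> 0"
  proof
    assume "m = 0"
    then have "card ?N = card (carrier G)" using lag m by (simp add: order_def)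
    then have "?N = carrier G" using card_subset_eq[OF fin zeta_subset] by simp
    with ne show False ..
  qed
  moreover have "order ?Q = p ^ m" using m cQ by (simp add: order_def)
  ultimately obtain z where z: "z \<in> carrier ?Q" "z \<noteq> \<one>\<^bsub>?Q\<^esub>"
      "\<forall>g\<in>carrier ?Q. z \<otimes>\<^bsub>?Q\<^esub> g = g \<otimes>\<^bsub>?Q\<^esub> z"
    using group.center_nontrivial[OF grpQ finQ p, of m] by auto
  obtain x where x: "x \<in> carrier G" "z = ?N #> x" using z(1) unfolding carrier_FactGroup by auto
  have "x \<notin> ?N"
  proof
    assume "x \<in> ?N"
    then have "?N #> x = ?N" by (rule Nn.rcos_const[OF is_group])
    then show False using z(2) x(2) by simp
  qed
  moreover have "x \<in> zeta G (Suc i)"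
  proof -
    have "(?N #> x) \<otimes>\<^bsub>?Q\<^esub> (?N #> g) = (?N #> g) \<otimes>\<^bsub>?Q\<^esub> (?N #> x)" if g: "g \<in> carrier G" for g
    proof -
      have "?N #> g \<in> carrier ?Q" using g unfolding carrier_FactGroup by auto
      then show ?thesis using z(3) x(2) by blast
    qed
    then show ?thesis unfolding zeta_Suc_char[OF N] using x(1) by blast
  qed
  ultimately show ?thesis by blast
qed

lemma (in group) zeta_top:
  assumes fin: "finite (carrier G)" and p: "Factorial_Ring.prime (p::nat)"
    and ordG: "order G = p ^ n"
  shows "zeta G (card (carrier G)) = carrier G"
proof -
  have fz: "finite (zeta G j)" for j using finite_subset[OF zeta_subset fin] .
  have *: "zeta G i = carrier G \<or> i < card (zeta G i)" for i
  proof (induction i)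
    case 0
    then show ?case by simp
  next
    case (Suc i)
    show ?case
    proof (cases "zeta G i = carrier G")
      case True
      then have "zeta G (Suc i) = carrier G" using zeta_mono[of i] zeta_subset[of "Suc i"] by blast
      then show ?thesis ..
    next
      case False
      then have lt: "i < card (zeta G i)" using Suc.IH by blast
      obtain x where "x \<in> zeta G (Suc i)" "x \<notin> zeta G i"
        using zeta_grow[OF fin p ordG False] by blast
      then have "zeta G i \<subset> zeta G (Suc i)" using zeta_mono[of i] by blast
      then have "card (zeta G i) < card (zeta G (Suc i))" using psubset_card_mono[OF fz] by blast
      then show ?thesis using lt by simp
    qed
  qed
  show ?thesis
  proof (rule ccontr)
    assume ne: "zeta G (card (carrier G)) \<noteq> carrier G"
    then have "card (carrier G) < card (zeta G (card (carrier G)))" using * by blast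
    moreover have "card (zeta G (card (carrier G))) \<le> card (carrier G)"
      using card_mono[OF fin zeta_subset] .
    ultimately show False by simp
  qed
qed


lemma (in group) exp_pow_one:
  assumes fin: "finite (carrier G)" and e: "group_exponent G = m"
  shows "0 < m \<and> (\<forall>x \<in> carrier G. x [^] m = \<one>)"
proof -
  have "0 < order G \<and> (\<forall>x \<in> carrier G. x [^] order G = \<one>)"
    using fin order_gt_0_iff_finite pow_order_eq_1 by blast
  then have "0 < group_exponent G \<and> (\<forall>x \<in> carrier G. x [^] group_exponent G = \<one>)"
    unfolding group_exponent_def by (rule LeastI)
  then show ?thesis using e by simp
qed

lemma (in group) exp_ord_ppow:
  assumes fin: "finite (carrier G)" and e: "group_exponent G = p ^ s"
    and p: "Factorial_Ring.prime (p::nat)" and x: "x \<in> carrier G"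
  shows "ord x dvd p ^ s" "\<exists>k \<le> s. ord x = p ^ k"
proof -
  show "ord x dvd p ^ s" using exp_pow_one[OF fin e] x pow_eq_id by blast
  then show "\<exists>k \<le> s. ord x = p ^ k" using divides_primepow_nat[OF p] by auto
qed

lemma (in group) exp_max_elem:
  assumes fin: "finite (carrier G)" and e: "group_exponent G = p ^ s"
    and p: "Factorial_Ring.prime (p::nat)"
  shows "\<exists>w \<in> carrier G. ord w = p ^ s"
proof -
  let ?m = "Max (ord ` carrier G)"
  have ne: "ord ` carrier G \<noteq> {}" by auto
  have fo: "finite (ord ` carrier G)" using fin by simp
  obtain w where w: "w \<in> carrier G" "ord w = ?m" using Max_in[OF fo ne] by auto
  obtain t where t: "?m = p ^ t" "t \<le> s" using exp_ord_ppow(2)[OF fin e p w(1)] w(2) by auto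
  have p1: "1 < p" using p prime_gt_1_nat by blast
  have "x [^] ?m = \<one>" if x: "x \<in> carrier G" for x
  proof -
    obtain i where i: "ord x = p ^ i" using exp_ord_ppow(2)[OF fin e p x] by auto
    have "ord x \<le> ?m" using Max_ge[OF fo] x by simp
    then have "i \<le> t" using i t(1) power_le_imp_le_exp[OF p1] by simp
    then have "ord x dvd ?m" using i t(1) le_imp_power_dvd by simp
    then show ?thesis using x pow_eq_id by blast
  qed
  moreover have "0 < ?m" using t(1) p1 by simp
  ultimately have "group_exponent G \<le> ?m"
    unfolding group_exponent_def by (intro Least_le) blast
  then have "p ^ s \<le> p ^ t" using e t(1) by simp
  then have "s \<le> t" using power_le_imp_le_exp[OF p1] by simp
  then have "?m = p ^ s" using t by simp
  then show ?thesis using w by auto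
qed

lemma nat_prime_power_from_factors:
  fixes n p :: nat
  assumes "0 < n" "\<forall>q. Factorial_Ring.prime q \<longrightarrow> q dvd n \<longrightarrow> q = p"
  shows "\<exists>k. n = p ^ k"
  using assms
proof (induction n rule: less_induct)
  case (less n)
  show ?case
  proof (cases "n = 1")
    case True then show ?thesis by (intro exI[of _ 0]) simp
  next
    case False
    obtain q where q: "Factorial_Ring.prime q" "q dvd n" using prime_factor_nat[OF False] by blast
    then have qp: "q = p" using less.prems by blast
    obtain m where m: "n = q * m" using q(2) by (auto elim: dvdE)
    have q1: "1 < q" using q(1) prime_gt_1_nat by blast
    have m0: "0 < m" using m less.prems(1) by simp
    have "m < n" using m m0 q1 by simp
    moreover have "\<forall>r. Factorial_Ring.prime r \<longrightarrow> r dvd m \<longrightarrow> r = p"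
      using less.prems(2) m by auto
    ultimately obtain k where "m = p ^ k" using less.IH m0 by blast
    then show ?thesis using m qp by (intro exI[of _ "Suc k"]) simp
  qed
qed

lemma (in group) order_ppow:
  assumes fin: "finite (carrier G)" and e: "group_exponent G = p ^ s"
    and p: "Factorial_Ring.prime (p::nat)"
  shows "\<exists>n. order G = p ^ n"
proof (rule nat_prime_power_from_factors)
  show "0 < order G" using fin order_gt_0_iff_finite by blast
  show "\<forall>q. Factorial_Ring.prime q \<longrightarrow> q dvd order G \<longrightarrow> q = p"
  proof (intro allI impI)
    fix q :: nat assume q: "Factorial_Ring.prime q" "q dvd order G"
    obtain m where m: "order G = q ^ 1 * m" using q(2) by (auto elim: dvdE)
    obtain H where H: "subgroup H G" "card H = q ^ 1"
      using sylow_thm[OF q(1) is_group m fin] by blast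
    have "card H \<ge> 2" using H(2) q(1) prime_ge_2_nat by simp
    then have "\<not> H \<subseteq> {\<one>}" using card_mono[of "{\<one>}" H] by auto
    then obtain h where h: "h \<in> H" "h \<noteq> \<one>" by blast
    have hc: "h \<in> carrier G" using h H(1) subgroup.subset by blast
    let ?K = "subgroup_generated G H"
    have grpK: "group ?K" by simp
    have cK: "carrier ?K = H" using H(1) subgroup.carrier_subgroup_generated_subgroup by blast
    have "group.ord ?K h dvd order ?K" using group.ord_dvd_group_order[OF grpK] h(1) cK by blast
    then have "ord h dvd q" using ord_sgg[OF is_group] cK H(2) by (simp add: order_def)
    moreover have "ord h \<noteq> 1" using ord_eq_1 hc h(2) by simp
    ultimately have "ord h = q" using q(1) by (meson prime_nat_iff)
    moreover have "ord h dvd p ^ s" using exp_ord_ppow(1)[OF fin e p hc] .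
    ultimately have "q dvd p ^ s" by simp
    then have "q dvd p" using prime_dvd_power q(1) by blast
    then show "q = p" using primes_dvd_imp_eq q(1) p by blast
  qed
qed


lemma (in group) reg_transfer:
  assumes reg: "one_tuple_regular G" and g1: "g1 \<in> carrier G" and h1: "h1 \<in> carrier G"
    and o: "ord g1 = ord h1"
  obtains \<Psi> where "bij_betw \<Psi> (carrier G) (carrier G)"
    "\<And>g. g \<in> carrier G \<Longrightarrow> \<exists>\<phi>. \<phi> \<in> iso (subgroup_generated G {g1, g}) (subgroup_generated G {h1, \<Psi> g})
               \<and> \<phi> g1 = h1 \<and> \<phi> g = \<Psi> g"
  using reg g1 h1 o unfolding one_tuple_regular_def by blast

lemma (in group) main_ord:
  assumes fin: "finite (carrier G)" and e: "group_exponent G = p ^ s"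
    and p: "Factorial_Ring.prime (p::nat)" and reg: "one_tuple_regular G"
    and x: "x \<in> carrier G" "x \<noteq> \<one>" and b: "b \<in> carrier G"
  shows "ord (commutator G x b) < ord x"
proof -
  obtain n where ordG: "order G = p ^ n" using order_ppow[OF fin e p] by blast
  have p1: "1 < p" using p prime_gt_1_nat by blast
  have key: "\<forall>x \<in> zeta G i. x \<noteq> \<one> \<longrightarrow> (\<forall>b \<in> carrier G. ord (commutator G x b) < ord x)" for i
  proof (induction i)
    case 0
    then show ?case by simp
  next
    case (Suc i)
    show ?case
    proof (intro ballI impI)
      fix x b assume x: "x \<in> zeta G (Suc i)" "x \<noteq> \<one>" and b: "b \<in> carrier G"
      have xc: "x \<in> carrier G" using x(1) zeta_subset by blast
      let ?u = "commutator G x b"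
      have uz: "?u \<in> zeta G i" using x(1) b by simp
      have uc: "?u \<in> carrier G" using xc b by simp
      show "ord ?u < ord x"
      proof (rule ccontr)
        assume "\<not> ord ?u < ord x"
        then have le: "ord x \<le> ord ?u" by simp
        obtain k where k: "ord x = p ^ k" using exp_ord_ppow(2)[OF fin e p xc] by blast
        obtain v where v: "ord ?u = p ^ v" using exp_ord_ppow(2)[OF fin e p uc] by blast
        have kv: "k \<le> v" using le k v power_le_imp_le_exp[OF p1] by simp
        let ?c = "?u [^] (p ^ (v - k))"
        have pv: "p ^ v = p ^ k * p ^ (v - k)" using kv by (simp flip: power_add)
        have "ord ?c = ord ?u div p ^ (v - k)"
          using ord_pow[OF uc] v pv p1 by simp
        then have oc: "ord ?c = ord x" using v pv k p1 by simp
        have cz: "?c \<in> zeta G i"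
          using subgroup.pow_closed_sub[OF normal_imp_subgroup[OF zeta_normal] is_group uz] .
        have cc: "?c \<in> carrier G" using uc by simp
        have c1: "?c \<noteq> \<one>" using oc x(2) ord_eq_1 xc by fastforce
        obtain \<Psi> where bij: "bij_betw \<Psi> (carrier G) (carrier G)"
          and iso: "\<And>g. g \<in> carrier G \<Longrightarrow> \<exists>\<phi>. \<phi> \<in> iso (subgroup_generated G {?c, g}) (subgroup_generated G {x, \<Psi> g})
               \<and> \<phi> ?c = x \<and> \<phi> g = \<Psi> g"
          using reg_transfer[OF reg cc xc oc] by blast
        have "b \<in> \<Psi> ` carrier G" using bij b by (simp add: bij_betw_def)
        then obtain g where g: "g \<in> carrier G" "\<Psi> g = b" by (metis imageE)
        obtain \<phi> where \<phi>: "\<phi> \<in> iso (subgroup_generated G {?c, g}) (subgroup_generated G {x, b})"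
          "\<phi> ?c = x" "\<phi> g = b"
          using iso[OF g(1)] g(2) by auto
        let ?S = "subgroup_generated G {?c, g}"
        let ?T = "subgroup_generated G {x, b}"
        have gS: "group ?S" and gT: "group ?T" by simp_all
        have inS: "?c \<in> carrier ?S" "g \<in> carrier ?S"
          using subgroup_generated_subset_carrier_subset[of "{?c, g}"] cc g(1) by auto
        have inT: "x \<in> carrier ?T" "b \<in> carrier ?T"
          using subgroup_generated_subset_carrier_subset[of "{x, b}"] xc b by auto
        have hom: "\<phi> \<in> hom ?S ?T" using \<phi>(1) by (simp add: iso_def)
        have "\<phi> (commutator ?S ?c g) = commutator ?T x b"
          using hom_commutator[OF gS gT hom inS] \<phi>(2,3) by simp
        then have eq: "\<phi> (commutator G ?c g) = ?u"
          using commutator_sgg[OF is_group inS] commutator_sgg[OF is_group inT] by simp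
        have cmS: "commutator G ?c g \<in> carrier ?S"
          using group.commutator_closed[OF gS inS] commutator_sgg[OF is_group inS] by simp
        have "group.ord ?T (\<phi> (commutator G ?c g)) = group.ord ?S (commutator G ?c g)"
          by (rule iso_ord[OF gS gT \<phi>(1) cmS])
        then have "ord ?u = ord (commutator G ?c g)"
          using eq ord_sgg[OF is_group] by simp
        moreover have "ord (commutator G ?c g) < ord ?c" using Suc.IH cz c1 g(1) by blast
        ultimately show False using oc le by simp
      qed
    qed
  qed
  have "x \<in> zeta G (card (carrier G))" using zeta_top[OF fin p ordG] x(1) by simp
  then show ?thesis using key x(2) b by blast
qed

lemma (in group) pth_power:
  assumes fin: "finite (carrier G)" and e: "group_exponent G = p ^ s"
    and p: "Factorial_Ring.prime (p::nat)" and reg: "one_tuple_regular G"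
    and y: "y \<in> carrier G" "ord y < p ^ s"
  shows "\<exists>z \<in> carrier G. y = z [^] p"
proof -
  have p1: "1 < p" using p prime_gt_1_nat by blast
  obtain w where w: "w \<in> carrier G" "ord w = p ^ s" using exp_max_elem[OF fin e p] by blast
  have "\<exists>k \<le> s. ord y = p ^ k" by (rule exp_ord_ppow(2)[OF fin e p y(1)])
  then obtain k where k: "ord y = p ^ k" by (elim exE conjE)
  have "p ^ k < p ^ s" using y(2) k by simp
  then have ks: "k < s" using power_less_imp_less_exp[OF p1] by blast
  let ?w = "w [^] (p ^ (s - Suc k))"
  have "Suc k + (s - Suc k) = s" using ks by simp
  then have ps: "p ^ s = p ^ Suc k * p ^ (s - Suc k)" by (metis power_add)
  have "ord ?w = ord w div p ^ (s - Suc k)" using ord_pow[OF w(1)] w(2) ps p1 by simp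
  then have ow: "ord ?w = p ^ Suc k" using w(2) ps p1 by simp
  have wc: "?w \<in> carrier G" using w(1) by simp
  let ?z = "?w [^] p"
  have zc: "?z \<in> carrier G" using wc by simp
  have "ord ?z = ord ?w div p" using ord_pow[OF wc] ow p1 by simp
  then have oz: "ord ?z = ord y" using ow k p1 by simp
  obtain \<Psi> where bij: "bij_betw \<Psi> (carrier G) (carrier G)"
    and iso: "\<And>g. g \<in> carrier G \<Longrightarrow> \<exists>\<phi>. \<phi> \<in> iso (subgroup_generated G {?z, g}) (subgroup_generated G {y, \<Psi> g})
               \<and> \<phi> ?z = y \<and> \<phi> g = \<Psi> g"
    using reg_transfer[OF reg zc y(1) oz] by blast
  obtain \<phi> where \<phi>: "\<phi> \<in> iso (subgroup_generated G {?z, ?w}) (subgroup_generated G {y, \<Psi> ?w})"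
      "\<phi> ?z = y" "\<phi> ?w = \<Psi> ?w"
    using iso[OF wc] by blast
  let ?S = "subgroup_generated G {?z, ?w}"
  let ?T = "subgroup_generated G {y, \<Psi> ?w}"
  have gS: "group ?S" and gT: "group ?T" by simp_all
  have inS: "?w \<in> carrier ?S"
    using subgroup_generated_subset_carrier_subset[of "{?z, ?w}"] zc wc by auto
  have hom: "\<phi> \<in> hom ?S ?T" using \<phi>(1) by (simp add: iso_def)
  have "\<phi> (?w [^]\<^bsub>?S\<^esub> p) = (\<phi> ?w) [^]\<^bsub>?T\<^esub> p"
    by (rule hom_nat_pow[OF hom inS gS gT])
  then have "y = (\<Psi> ?w) [^] p" using \<phi>(2,3) by (simp add: pow_subgroup_generated)
  moreover have "\<Psi> ?w \<in> carrier G" using bij wc unfolding bij_betw_def by auto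
  ultimately show ?thesis by blast
qed

theorem lemma4p4:
  fixes G (structure) and p s :: nat
  assumes "Factorial_Ring.prime p"
    and "group G"
    and "finite (carrier G)"
    and "group_exponent G = p ^ s"
    and "one_tuple_regular G"
  shows "(\<forall>a \<in> carrier G. \<forall>b \<in> carrier G. a \<noteq> \<one> \<longrightarrow> b \<noteq> \<one> \<longrightarrow>
            group.ord G (commutator G a b) < min (group.ord G a) (group.ord G b))
         \<and> (odd p \<longrightarrow> powerful_p_group G p)"
proof -
  interpret group G by fact
  note p = assms(1) and fin = assms(3) and e = assms(4) and reg = assms(5)
  have p1: "1 < p" using p prime_gt_1_nat by blast
  have part1: "\<forall>a \<in> carrier G. \<forall>b \<in> carrier G. a \<noteq> \<one> \<longrightarrow> b \<noteq> \<one> \<longrightarrow>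
            ord (commutator G a b) < min (ord a) (ord b)"
  proof (intro ballI impI)
    fix a b assume a: "a \<in> carrier G" and b: "b \<in> carrier G" and a1: "a \<noteq> \<one>" and b1: "b \<noteq> \<one>"
    have "ord (commutator G a b) < ord a" using main_ord[OF fin e p reg a a1 b] .
    moreover have "ord (commutator G b a) < ord b" using main_ord[OF fin e p reg b b1 a] .
    moreover have "ord (commutator G b a) = ord (commutator G a b)"
      using commutator_inv[OF a b] ord_inv[of "commutator G a b"] a b by simp
    ultimately show "ord (commutator G a b) < min (ord a) (ord b)" by simp
  qed
  have part2: "powerful_p_group G p" if odd: "odd p"
  proof -
    obtain n where ordG: "order G = p ^ n" using order_ppow[OF fin e p] by blast
    have "derived_set G (carrier G) \<subseteq> {x [^] (p ^ 1) | x. x \<in> carrier G}"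
    proof
      fix y assume "y \<in> derived_set G (carrier G)"
      then obtain a b where ab: "a \<in> carrier G" "b \<in> carrier G"
        "y = a \<otimes> b \<otimes> inv a \<otimes> inv b" by blast
      then have y: "y = commutator G a b" by (simp add: commutator_def)
      show "y \<in> {x [^] (p ^ 1) | x. x \<in> carrier G}"
      proof (cases "a = \<one>")
        case True
        then have "y = \<one> [^] (p ^ 1)" using y ab by (simp add: commutator_def)
        then show ?thesis by blast
      next
        case False
        have "ord y < ord a" using main_ord[OF fin e p reg ab(1) False ab(2)] y by simp
        moreover have "ord a \<le> p ^ s"
          using exp_ord_ppow(1)[OF fin e p ab(1)] p1 by (simp add: dvd_imp_le)
        ultimately have "ord y < p ^ s" by simp
        moreover have "y \<in> carrier G" using y ab by simp
        ultimately obtain z where "z \<in> carrier G" "y = z [^] p"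
          using pth_power[OF fin e p reg] by blast
        then show ?thesis by auto
      qed
    qed
    then have "derived G (carrier G) \<subseteq> agemo G p 1"
      unfolding derived_def agemo_def by (rule mono_generate)
    then show ?thesis unfolding powerful_p_group_def using fin ordG odd by auto
  qed
  show ?thesis using part1 part2 by blast
qed

end
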